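(* For all integers $n,k$ with $n\ge 4$ and $1\le k<n$, the Johnson graph $J(n,k)$ is paired 2-coverable.
   Context: Let $[n]=\{1,2,\dots,n\}$. The Johnson graph $J(n,k)$ ($0\le k\le n$) has as vertices the $k$-element subsets of $[n]$, two vertices being adjacent if and only if the corresponding subsets have exactly $k-1$ elements in common. A graph $G$ is \emph{paired 2-coverable} if for any four distinct vertices $u,v,x,y$ of $G$ there exist two vertex-disjoint paths $P$ and $Q$ in $G$ such that $P$ has endpoints $u$ and $v$, $Q$ has endpoints $x$ and $y$, and $V(P)\cup V(Q)=V(G)$. *)

theory Defs
  imports Main
begin

definition johnson_vertices :: "nat \<Rightarrow> nat \<Rightarrow> nat set set" where
  "johnson_vertices n k = {A. A \<subseteq> {1..n} \<and> card A = k}"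

text \<open>Two k-subsets are adjacent iff they have exactly k-1 common elements
  (written as card + 1 = k to avoid truncated subtraction).\<close>
definition johnson_adj :: "nat \<Rightarrow> nat set \<Rightarrow> nat set \<Rightarrow> bool" where
  "johnson_adj k A B \<longleftrightarrow> card (A \<inter> B) + 1 = k"

definition is_path :: "'a set \<Rightarrow> ('a \<Rightarrow> 'a \<Rightarrow> bool) \<Rightarrow> 'a list \<Rightarrow> 'a \<Rightarrow> 'a \<Rightarrow> bool" where
  "is_path V E p u v \<longleftrightarrow> p \<noteq> [] \<and> distinct p \<and> set p \<subseteq> V \<and>
     hd p = u \<and> last p = v \<and> (\<forall>i. Suc i < length p \<longrightarrow> E (p ! i) (p ! Suc i))"

definition paired_2_coverable :: "'a set \<Rightarrow> ('a \<Rightarrow> 'a \<Rightarrow> bool) \<Rightarrow> bool" where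
  "paired_2_coverable V E \<longleftrightarrow>
     (\<forall>u v x y. u \<in> V \<and> v \<in> V \<and> x \<in> V \<and> y \<in> V \<and> distinct [u, v, x, y] \<longrightarrow>
        (\<exists>P Q. is_path V E P u v \<and> is_path V E Q x y \<and> set P \<inter> set Q = {} \<and>
               set P \<union> set Q = V))"

end

theory Submission
  imports Defs
begin

definition good :: "'a set \<Rightarrow> ('a \<Rightarrow> 'a \<Rightarrow> bool) \<Rightarrow> 'a \<Rightarrow> 'a \<Rightarrow> 'a \<Rightarrow> 'a \<Rightarrow> bool" where
  "good V E u v x y \<longleftrightarrow> (\<exists>P Q. is_path V E P u v \<and> is_path V E Q x y \<and> set P \<inter> set Q = {} \<and>
               set P \<union> set Q = V)"

definition hamc :: "'a set \<Rightarrow> ('a \<Rightarrow> 'a \<Rightarrow> bool) \<Rightarrow> bool" where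
  "hamc V E \<longleftrightarrow> (\<forall>u\<in>V. \<forall>v\<in>V. u \<noteq> v \<longrightarrow> (\<exists>P. is_path V E P u v \<and> set P = V))"

lemma p2c_good: "paired_2_coverable V E \<longleftrightarrow>
  (\<forall>u v x y. u \<in> V \<and> v \<in> V \<and> x \<in> V \<and> y \<in> V \<and> distinct [u, v, x, y] \<longrightarrow> good V E u v x y)"
  by (simp add: paired_2_coverable_def good_def)

lemma is_path_alt: "is_path V E p u v \<longleftrightarrow> p \<noteq> [] \<and> distinct p \<and> set p \<subseteq> V \<and> hd p = u \<and> last p = v \<and> successively E p"
  by (simp add: is_path_def successively_conv_nth)

lemma is_path_mono: "is_path V E p u v \<Longrightarrow> V \<subseteq> W \<Longrightarrow> is_path W E p u v"
  by (auto simp: is_path_alt)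

lemma is_path_append: "is_path V E P u a \<Longrightarrow> is_path V E Q b v \<Longrightarrow> set P \<inter> set Q = {} \<Longrightarrow> E a b
  \<Longrightarrow> is_path V E (P @ Q) u v"
  by (auto simp: is_path_alt successively_append_iff)

lemma is_path_rev: "(\<And>a b. E a b \<Longrightarrow> E b a) \<Longrightarrow> is_path V E P u v \<Longrightarrow> is_path V E (rev P) v u"
  by (auto simp: is_path_alt successively_rev hd_rev last_rev intro: successively_mono)

lemma is_path_single: "u \<in> V \<Longrightarrow> is_path V E [u] u u"
  by (simp add: is_path_alt)

lemma is_path_Cons: "is_path V E (p # P') u v \<Longrightarrow> P' \<noteq> [] \<Longrightarrow>
   is_path V E P' (hd P') v \<and> E u (hd P') \<and> u = p \<and> p \<notin> set P' \<and> p \<in> V"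
  by (auto simp: is_path_alt successively_Cons)

lemma is_path_neq: "is_path V E P u v \<Longrightarrow> u \<noteq> v \<Longrightarrow> \<exists>P'. P = u # P' \<and> P' \<noteq> []"
  by (cases P) (auto simp: is_path_alt)

lemma absorb:
  assumes "is_path W E (p # P') u v" "P' \<noteq> []" "is_path W E H a a'" "set H \<inter> set (p # P') = {}"
    "E p a" "E a' (hd P')"
  shows "is_path W E (p # H @ P') u v"
proof -
  from is_path_Cons[OF assms(1,2)] have h: "is_path W E P' (hd P') v" "u = p" "p \<notin> set P'" "p \<in> W"
    by auto
  have "is_path W E (H @ P') a v" using is_path_append[OF assms(3) h(1)] assms(4,6) by auto
  moreover have "is_path W E [p] u u" using h by (simp add: is_path_single)
  ultimately have "is_path W E ([p] @ (H @ P')) u v" 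
    using is_path_append[of W E "[p]" u u "H @ P'" a v] assms(4,5) h by auto
  then show ?thesis by simp
qed

lemma good_swap1: "(\<And>a b. E a b \<Longrightarrow> E b a) \<Longrightarrow> good V E u v x y \<Longrightarrow> good V E v u x y"
  unfolding good_def by (metis is_path_rev set_rev)

lemma good_swap2: "(\<And>a b. E a b \<Longrightarrow> E b a) \<Longrightarrow> good V E u v x y \<Longrightarrow> good V E u v y x"
  unfolding good_def by (metis is_path_rev set_rev)

lemma good_swap3: "good V E u v x y \<Longrightarrow> good V E x y u v"
  unfolding good_def by blast

lemma complete_succ: "(\<forall>a\<in>V. \<forall>b\<in>V. a \<noteq> b \<longrightarrow> E a b) \<Longrightarrow> distinct p \<Longrightarrow> set p \<subseteq> V \<Longrightarrow> successively E p"
proof (induction p)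
  case (Cons a p)
  then show ?case by (cases p) (auto simp: successively_Cons)
qed simp

lemma complete_hamc: assumes "finite V" "\<forall>a\<in>V. \<forall>b\<in>V. a \<noteq> b \<longrightarrow> E a b" shows "hamc V E"
  unfolding hamc_def
proof (intro ballI impI)
  fix u v assume uv: "u \<in> V" "v \<in> V" "u \<noteq> v"
  obtain L where L: "set L = V - {u, v}" "distinct L"
    using finite_distinct_list[of "V - {u,v}"] assms(1) by auto
  let ?P = "u # L @ [v]"
  have "distinct ?P" "set ?P = V" using L uv by auto
  then show "\<exists>P. is_path V E P u v \<and> set P = V"
    by (intro exI[of _ ?P]) (auto simp: is_path_alt intro!: complete_succ[OF assms(2)])
qed

lemma complete_p2c: assumes "finite V" "\<forall>a\<in>V. \<forall>b\<in>V. a \<noteq> b \<longrightarrow> E a b" shows "paired_2_coverable V E"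
  unfolding p2c_good
proof (intro allI impI)
  fix u v x y assume h: "u \<in> V \<and> v \<in> V \<and> x \<in> V \<and> y \<in> V \<and> distinct [u, v, x, y]"
  obtain L where L: "set L = V - {u, v, x, y}" "distinct L"
    using finite_distinct_list[of "V - {u,v,x,y}"] assms(1) by auto
  let ?P = "u # L @ [v]"
  let ?Q = "[x, y]"
  have "distinct ?P" "set ?P \<subseteq> V" "distinct ?Q" "set ?Q \<subseteq> V" using L h by auto
  then have "is_path V E ?P u v" "is_path V E ?Q x y"
    using h assms(2) by (auto simp: is_path_alt intro!: complete_succ[OF assms(2)])
  moreover have "set ?P \<inter> set ?Q = {}" "set ?P \<union> set ?Q = V" using L h by auto
  ultimately show "good V E u v x y" unfolding good_def by blast
qed

lemma avoid: "finite B \<Longrightarrow> card B < card X \<Longrightarrow> \<exists>a\<in>X. a \<notin> B"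
  by (meson card_mono subsetI leD)
lemma avoid2: assumes "finite B" "card B + 2 \<le> card X" shows "\<exists>a\<in>X. \<exists>b\<in>X. a \<noteq> b \<and> a \<notin> B \<and> b \<notin> B"
proof -
  have "card B < card X" using assms(2) by simp
  then obtain a where a: "a \<in> X" "a \<notin> B" using avoid[OF assms(1)] by blast
  have "card (insert a B) < card X" using assms a
    by (simp add: card_insert_if)
  then obtain b where "b \<in> X" "b \<notin> insert a B" using avoid[of "insert a B" X] assms(1) by auto
  then show ?thesis using a by blast
qed
definition JV :: "nat set \<Rightarrow> nat set \<Rightarrow> nat \<Rightarrow> nat set set" where
  "JV T F K = {A. F \<subseteq> A \<and> A \<subseteq> T \<and> card A = K}"
lemma binom_ge: "0 < k \<Longrightarrow> k < n \<Longrightarrow> n \<le> n choose k"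
proof (induction n arbitrary: k)
  case 0 then show ?case by simp
next
  case (Suc n)
  show ?case
  proof (cases "k = 1")
    case True then show ?thesis by simp
  next
    case False
    then obtain j where j: "k = Suc j" "0 < j" using Suc.prems by (cases k) auto
    have "n \<le> n choose j" using Suc.IH[of j] j Suc.prems by auto
    moreover have "0 < n choose k" using j Suc.prems by (simp add: zero_less_binomial_iff)
    moreover have "Suc n choose k = (n choose j) + (n choose k)" using j by simp
    ultimately show ?thesis by linarith
  qed
qed

lemma JV_card: assumes "finite T" "F \<subseteq> T" "card F \<le> K"
  shows "card (JV T F K) = card (T - F) choose (K - card F)"
proof -
  have fF: "finite F" using assms finite_subset by blast
  have "bij_betw (\<lambda>A. A - F) (JV T F K) {B. B \<subseteq> T - F \<and> card B = K - card F}"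
  proof (rule bij_betw_byWitness[where f' = "\<lambda>B. B \<union> F"])
    show "\<forall>a\<in>JV T F K. a - F \<union> F = a" by (auto simp: JV_def)
    show "\<forall>a'\<in>{B. B \<subseteq> T - F \<and> card B = K - card F}. a' \<union> F - F = a'" by auto
    show "(\<lambda>A. A - F) ` JV T F K \<subseteq> {B. B \<subseteq> T - F \<and> card B = K - card F}"
      using fF by (auto simp: JV_def card_Diff_subset)
    show "(\<lambda>B. B \<union> F) ` {B. B \<subseteq> T - F \<and> card B = K - card F} \<subseteq> JV T F K"
    proof safe
      fix B assume B: "B \<subseteq> T - F" "card B = K - card F"
      have "finite B" using B assms(1) finite_subset by blast
      then have "card (B \<union> F) = K" using B assms fF by (subst card_Un_disjoint) auto
      then show "B \<union> F \<in> JV T F K" using B assms by (auto simp: JV_def)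
    qed
  qed
  then have "card (JV T F K) = card {B. B \<subseteq> T - F \<and> card B = K - card F}"
    by (rule bij_betw_same_card)
  also have "\<dots> = card (T - F) choose (K - card F)"
    using assms(1) by (intro n_subsets) simp
  finally show ?thesis .
qed


lemma JV_card_ge: assumes "finite T" "F \<subseteq> T" "card F < K" "K < card T"
  shows "card T - card F \<le> card (JV T F K)"
proof -
  have fF: "finite F" using assms finite_subset by blast
  have "card (T - F) = card T - card F" using card_Diff_subset[OF fF assms(2)] .
  then have "card (JV T F K) = (card T - card F) choose (K - card F)"
    using JV_card[OF assms(1,2)] assms(3) by simp
  moreover have "card T - card F \<le> (card T - card F) choose (K - card F)"
    using assms(3,4) by (intro binom_ge) auto
  ultimately show ?thesis by simp
qed

lemma JV_finite: "finite T \<Longrightarrow> finite (JV T F K)"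
  unfolding JV_def by (rule finite_subset[of _ "Pow T"]) auto

lemma swap_card: assumes "finite A" "s \<in> A" "z \<notin> A"
  shows "card (insert z (A - {s})) = card A" "johnson_adj (card A) A (insert z (A - {s}))"
proof -
  have c0: "card A > 0" using assms card_gt_0_iff by blast
  have c1: "card (A - {s}) = card A - 1" using assms by (simp add: card_Diff_singleton)
  have "z \<notin> A - {s}" "finite (A - {s})" using assms by auto
  then have "card (insert z (A - {s})) = Suc (card (A - {s}))" by simp
  then show "card (insert z (A - {s})) = card A" using c0 c1 by simp
  have "A \<inter> insert z (A - {s}) = A - {s}" using assms by auto
  then show "johnson_adj (card A) A (insert z (A - {s}))" using c0 c1
    by (simp add: johnson_adj_def)
qed

lemma JV_eq_low: assumes "A \<in> JV T F K" "B \<in> JV T F K" "A \<noteq> B" "finite T"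
  shows "card (A \<inter> B) < K" "card F \<le> card (A \<inter> B)"
proof -
  have s: "F \<subseteq> A" "A \<subseteq> T" "card A = K" "F \<subseteq> B" "B \<subseteq> T" "card B = K" using assms(1,2) by (auto simp: JV_def)
  have f: "finite A" "finite B" using s assms(4) finite_subset by blast+
  have "A \<inter> B \<noteq> A"
  proof
    assume "A \<inter> B = A" then have "A \<subseteq> B" by auto
    then have "A = B" using card_subset_eq[OF f(2)] s by simp
    then show False using assms(3) by simp
  qed
  then have "A \<inter> B \<subset> A" by auto
  then have "card (A \<inter> B) < card A" using f(1) psubset_card_mono by blast
  then show "card (A \<inter> B) < K" using s by simp
  have "F \<subseteq> A \<inter> B" using s by auto
  then show "card F \<le> card (A \<inter> B)" using f by (intro card_mono) auto
qed

lemma JV_complete1: assumes "finite T" "K = Suc (card F)"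
  shows "\<forall>A\<in>JV T F K. \<forall>B\<in>JV T F K. A \<noteq> B \<longrightarrow> johnson_adj K A B"
proof (intro ballI impI)
  fix A B assume h: "A \<in> JV T F K" "B \<in> JV T F K" "A \<noteq> B"
  from JV_eq_low[OF h assms(1)] assms(2) have "card (A \<inter> B) = card F" by linarith
  then show "johnson_adj K A B" using assms(2) by (simp add: johnson_adj_def)
qed

lemma JV_complete2: assumes "finite T" "Suc K = card T"
  shows "\<forall>A\<in>JV T F K. \<forall>B\<in>JV T F K. A \<noteq> B \<longrightarrow> johnson_adj K A B"
proof (intro ballI impI)
  fix A B assume h: "A \<in> JV T F K" "B \<in> JV T F K" "A \<noteq> B"
  have s: "A \<subseteq> T" "card A = K" "B \<subseteq> T" "card B = K" using h by (auto simp: JV_def)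
  have f: "finite A" "finite B" using s assms(1) finite_subset by blast+
  have "card (A \<union> B) \<le> card T" using s assms by (intro card_mono) auto
  moreover have "card (A \<union> B) + card (A \<inter> B) = card A + card B" using card_Un_Int f by metis
  moreover note JV_eq_low(1)[OF h assms(1)]
  ultimately have "card (A \<inter> B) + 1 = K" using s assms(2) by linarith
  then show "johnson_adj K A B" by (simp add: johnson_adj_def)
qed

lemma JV_split: assumes "e \<in> T" "e \<notin> F"
  shows "JV T F K = JV (T - {e}) F K \<union> JV T (insert e F) K" "JV (T - {e}) F K \<inter> JV T (insert e F) K = {}"
  using assms by (auto simp: JV_def)

lemma octa_core:
  fixes u v x y w1 w2 :: 'a
  assumes d: "distinct [u, v, x, y, w1, w2]"
    and s: "\<forall>a\<in>{u,v,x,y,w1,w2}. \<sigma> a \<in> {u,v,x,y,w1,w2} \<and> \<sigma> (\<sigma> a) = a \<and> \<sigma> a \<noteq> a"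
  defines "E \<equiv> \<lambda>a b. a \<noteq> b \<and> b \<noteq> \<sigma> a"
  shows "(E u w1 \<and> E w1 v \<and> E x w2 \<and> E w2 y) \<or> (E u w2 \<and> E w2 v \<and> E x w1 \<and> E w1 y) \<or>
         (E u w1 \<and> E w1 w2 \<and> E w2 v \<and> E x y) \<or> (E u w2 \<and> E w2 w1 \<and> E w1 v \<and> E x y) \<or>
         (E u v \<and> E x w1 \<and> E w1 w2 \<and> E w2 y) \<or> (E u v \<and> E x w2 \<and> E w2 w1 \<and> E w1 y)"
proof -
  have inv: "\<sigma> (\<sigma> u) = u" "\<sigma> (\<sigma> v) = v" "\<sigma> (\<sigma> x) = x" "\<sigma> (\<sigma> y) = y" "\<sigma> (\<sigma> w1) = w1" "\<sigma> (\<sigma> w2) = w2"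
    using s by auto
  have SU: "\<sigma> u = v \<or> \<sigma> u = x \<or> \<sigma> u = y \<or> \<sigma> u = w1 \<or> \<sigma> u = w2" using s d by auto
  show ?thesis
  using SU proof (elim disjE)
    assume "\<sigma> u = v"
    then have A1: "\<sigma> u = v" "\<sigma> v = u" using inv by auto
    have SR: "\<sigma> x = y \<or> \<sigma> x = w1 \<or> \<sigma> x = w2" using s d A1 inv by auto
    show ?thesis
    using SR proof (elim disjE)
      assume "\<sigma> x = y"
      then have A2: "\<sigma> x = y" "\<sigma> y = x" using inv by auto
      have A3: "\<sigma> w1 = w2" "\<sigma> w2 = w1" using s d A1 A2 inv by auto
      show ?thesis unfolding E_def using A1 A2 A3 d by auto
    next
      assume "\<sigma> x = w1"
      then have A2: "\<sigma> x = w1" "\<sigma> w1 = x" using inv by auto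
      have A3: "\<sigma> y = w2" "\<sigma> w2 = y" using s d A1 A2 inv by auto
      show ?thesis unfolding E_def using A1 A2 A3 d by auto
    next
      assume "\<sigma> x = w2"
      then have A2: "\<sigma> x = w2" "\<sigma> w2 = x" using inv by auto
      have A3: "\<sigma> y = w1" "\<sigma> w1 = y" using s d A1 A2 inv by auto
      show ?thesis unfolding E_def using A1 A2 A3 d by auto
    qed
  next
    assume "\<sigma> u = x"
    then have A1: "\<sigma> u = x" "\<sigma> x = u" using inv by auto
    have SR: "\<sigma> v = y \<or> \<sigma> v = w1 \<or> \<sigma> v = w2" using s d A1 inv by auto
    show ?thesis
    using SR proof (elim disjE)
      assume "\<sigma> v = y"
      then have A2: "\<sigma> v = y" "\<sigma> y = v" using inv by auto
      have A3: "\<sigma> w1 = w2" "\<sigma> w2 = w1" using s d A1 A2 inv by auto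
      show ?thesis unfolding E_def using A1 A2 A3 d by auto
    next
      assume "\<sigma> v = w1"
      then have A2: "\<sigma> v = w1" "\<sigma> w1 = v" using inv by auto
      have A3: "\<sigma> y = w2" "\<sigma> w2 = y" using s d A1 A2 inv by auto
      show ?thesis unfolding E_def using A1 A2 A3 d by auto
    next
      assume "\<sigma> v = w2"
      then have A2: "\<sigma> v = w2" "\<sigma> w2 = v" using inv by auto
      have A3: "\<sigma> y = w1" "\<sigma> w1 = y" using s d A1 A2 inv by auto
      show ?thesis unfolding E_def using A1 A2 A3 d by auto
    qed
  next
    assume "\<sigma> u = y"
    then have A1: "\<sigma> u = y" "\<sigma> y = u" using inv by auto
    have SR: "\<sigma> v = x \<or> \<sigma> v = w1 \<or> \<sigma> v = w2" using s d A1 inv by auto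
    show ?thesis
    using SR proof (elim disjE)
      assume "\<sigma> v = x"
      then have A2: "\<sigma> v = x" "\<sigma> x = v" using inv by auto
      have A3: "\<sigma> w1 = w2" "\<sigma> w2 = w1" using s d A1 A2 inv by auto
      show ?thesis unfolding E_def using A1 A2 A3 d by auto
    next
      assume "\<sigma> v = w1"
      then have A2: "\<sigma> v = w1" "\<sigma> w1 = v" using inv by auto
      have A3: "\<sigma> x = w2" "\<sigma> w2 = x" using s d A1 A2 inv by auto
      show ?thesis unfolding E_def using A1 A2 A3 d by auto
    next
      assume "\<sigma> v = w2"
      then have A2: "\<sigma> v = w2" "\<sigma> w2 = v" using inv by auto
      have A3: "\<sigma> x = w1" "\<sigma> w1 = x" using s d A1 A2 inv by auto
      show ?thesis unfolding E_def using A1 A2 A3 d by auto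
    qed
  next
    assume "\<sigma> u = w1"
    then have A1: "\<sigma> u = w1" "\<sigma> w1 = u" using inv by auto
    have SR: "\<sigma> v = x \<or> \<sigma> v = y \<or> \<sigma> v = w2" using s d A1 inv by auto
    show ?thesis
    using SR proof (elim disjE)
      assume "\<sigma> v = x"
      then have A2: "\<sigma> v = x" "\<sigma> x = v" using inv by auto
      have A3: "\<sigma> y = w2" "\<sigma> w2 = y" using s d A1 A2 inv by auto
      show ?thesis unfolding E_def using A1 A2 A3 d by auto
    next
      assume "\<sigma> v = y"
      then have A2: "\<sigma> v = y" "\<sigma> y = v" using inv by auto
      have A3: "\<sigma> x = w2" "\<sigma> w2 = x" using s d A1 A2 inv by auto
      show ?thesis unfolding E_def using A1 A2 A3 d by auto
    next
      assume "\<sigma> v = w2"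
      then have A2: "\<sigma> v = w2" "\<sigma> w2 = v" using inv by auto
      have A3: "\<sigma> x = y" "\<sigma> y = x" using s d A1 A2 inv by auto
      show ?thesis unfolding E_def using A1 A2 A3 d by auto
    qed
  next
    assume "\<sigma> u = w2"
    then have A1: "\<sigma> u = w2" "\<sigma> w2 = u" using inv by auto
    have SR: "\<sigma> v = x \<or> \<sigma> v = y \<or> \<sigma> v = w1" using s d A1 inv by auto
    show ?thesis
    using SR proof (elim disjE)
      assume "\<sigma> v = x"
      then have A2: "\<sigma> v = x" "\<sigma> x = v" using inv by auto
      have A3: "\<sigma> y = w1" "\<sigma> w1 = y" using s d A1 A2 inv by auto
      show ?thesis unfolding E_def using A1 A2 A3 d by auto
    next
      assume "\<sigma> v = y"
      then have A2: "\<sigma> v = y" "\<sigma> y = v" using inv by auto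
      have A3: "\<sigma> x = w1" "\<sigma> w1 = x" using s d A1 A2 inv by auto
      show ?thesis unfolding E_def using A1 A2 A3 d by auto
    next
      assume "\<sigma> v = w1"
      then have A2: "\<sigma> v = w1" "\<sigma> w1 = v" using inv by auto
      have A3: "\<sigma> x = y" "\<sigma> y = x" using s d A1 A2 inv by auto
      show ?thesis unfolding E_def using A1 A2 A3 d by auto
    qed
  qed

qed


lemma good6: assumes "distinct (P @ Q)" "set (P @ Q) = V" "P \<noteq> []" "Q \<noteq> []" "hd P = u" "last P = v"
  "hd Q = x" "last Q = y" "successively E P" "successively E Q" shows "good V E u v x y"
  unfolding good_def using assms by (intro exI[of _ P] exI[of _ Q]) (auto simp: is_path_alt)

lemma octa: assumes "finite V" "card V = 6" "\<forall>a\<in>V. \<sigma> a \<in> V \<and> \<sigma> (\<sigma> a) = a \<and> \<sigma> a \<noteq> a"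
  "\<forall>a\<in>V. \<forall>b\<in>V. E a b \<longleftrightarrow> (a \<noteq> b \<and> b \<noteq> \<sigma> a)" shows "paired_2_coverable V E"
  unfolding p2c_good
proof (intro allI impI)
  fix u v x y assume h: "u \<in> V \<and> v \<in> V \<and> x \<in> V \<and> y \<in> V \<and> distinct [u, v, x, y]"
  have c4: "card {u,v,x,y} = 4" using h by auto
  have "card (V - {u,v,x,y}) = 2" using card_Diff_subset[of "{u,v,x,y}" V] h c4 assms(2) by auto
  then obtain w1 w2 where w: "V - {u,v,x,y} = {w1,w2}" "w1 \<noteq> w2" by (meson card_2_iff)
  have Veq: "V = {u,v,x,y,w1,w2}" using w h by auto
  have d: "distinct [u,v,x,y,w1,w2]" using w h by auto
  have s: "\<forall>a\<in>{u,v,x,y,w1,w2}. \<sigma> a \<in> {u,v,x,y,w1,w2} \<and> \<sigma> (\<sigma> a) = a \<and> \<sigma> a \<noteq> a"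
    using assms(3) by (simp only: Veq[symmetric])
  have Eeq: "\<And>a b. a \<in> {u,v,x,y,w1,w2} \<Longrightarrow> b \<in> {u,v,x,y,w1,w2} \<Longrightarrow> E a b = (a \<noteq> b \<and> b \<noteq> \<sigma> a)"
    using assms(4) Veq by blast
  have core: "(E u w1 \<and> E w1 v \<and> E x w2 \<and> E w2 y) \<or> (E u w2 \<and> E w2 v \<and> E x w1 \<and> E w1 y) \<or>
         (E u w1 \<and> E w1 w2 \<and> E w2 v \<and> E x y) \<or> (E u w2 \<and> E w2 w1 \<and> E w1 v \<and> E x y) \<or>
         (E u v \<and> E x w1 \<and> E w1 w2 \<and> E w2 y) \<or> (E u v \<and> E x w2 \<and> E w2 w1 \<and> E w1 y)"
    using octa_core[OF d s] by (simp add: Eeq)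
  from core show "good V E u v x y"
  proof (elim disjE)
    assume "E u w1 \<and> E w1 v \<and> E x w2 \<and> E w2 y" then show ?thesis
      using d Veq by (intro good6[of "[u,w1,v]" "[x,w2,y]"]) auto
  next
    assume "E u w2 \<and> E w2 v \<and> E x w1 \<and> E w1 y" then show ?thesis
      using d Veq by (intro good6[of "[u,w2,v]" "[x,w1,y]"]) auto
  next
    assume "E u w1 \<and> E w1 w2 \<and> E w2 v \<and> E x y" then show ?thesis
      using d Veq by (intro good6[of "[u,w1,w2,v]" "[x,y]"]) auto
  next
    assume "E u w2 \<and> E w2 w1 \<and> E w1 v \<and> E x y" then show ?thesis
      using d Veq by (intro good6[of "[u,w2,w1,v]" "[x,y]"]) auto
  next
    assume "E u v \<and> E x w1 \<and> E w1 w2 \<and> E w2 y" then show ?thesis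
      using d Veq by (intro good6[of "[u,v]" "[x,w1,w2,y]"]) auto
  next
    assume "E u v \<and> E x w2 \<and> E w2 w1 \<and> E w1 y" then show ?thesis
      using d Veq by (intro good6[of "[u,v]" "[x,w2,w1,y]"]) auto
  qed
qed

lemma JV_octa: assumes "finite T" "F \<subseteq> T" "card T = card F + 4" "K = card F + 2"
  shows "paired_2_coverable (JV T F K) (johnson_adj K)"
proof (rule octa[where \<sigma> = "\<lambda>A. (T - A) \<union> F"])
  have fF: "finite F" using assms finite_subset by blast
  show "finite (JV T F K)" using JV_finite assms(1) .
  have "card (T - F) = 4" using card_Diff_subset[OF fF assms(2)] assms(3) by simp
  moreover have "K - card F = 2" using assms(4) by simp
  moreover have "(4::nat) choose 2 = 6" by (simp add: numeral_eq_Suc)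
  ultimately show "card (JV T F K) = 6" using JV_card[OF assms(1,2)] assms(4) by simp
  have inter: "A \<inter> ((T - A) \<union> F) = F" if "A \<in> JV T F K" for A using that by (auto simp: JV_def)
  have mem: "(T - A) \<union> F \<in> JV T F K" if A: "A \<in> JV T F K" for A
  proof -
    have s: "F \<subseteq> A" "A \<subseteq> T" "card A = K" using A by (auto simp: JV_def)
    have "finite A" using finite_subset[OF s(2) assms(1)] .
    then have "card (T - A) = card T - K" using card_Diff_subset[of A T] s by simp
    moreover have "card ((T - A) \<union> F) = card (T - A) + card F"
      using s fF assms(1) by (intro card_Un_disjoint) auto
    ultimately have "card ((T - A) \<union> F) = K" using assms(3,4) by simp
    then show ?thesis using assms(2) by (auto simp: JV_def)
  qed
  show "\<forall>a\<in>JV T F K. (T - a) \<union> F \<in> JV T F K \<and> (T - ((T - a) \<union> F)) \<union> F = a \<and> (T - a) \<union> F \<noteq> a"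
  proof
    fix A assume A: "A \<in> JV T F K"
    have s: "F \<subseteq> A" "A \<subseteq> T" "card A = K" using A by (auto simp: JV_def)
    have "(T - ((T - A) \<union> F)) \<union> F = A" using s by auto
    moreover have "(T - A) \<union> F \<noteq> A"
    proof
      assume "(T - A) \<union> F = A"
      then have "A = F" using inter[OF A] by auto
      then show False using s assms(4) by simp
    qed
    ultimately show "(T - A) \<union> F \<in> JV T F K \<and> (T - ((T - A) \<union> F)) \<union> F = A \<and> (T - A) \<union> F \<noteq> A"
      using mem[OF A] by blast
  qed
  show "\<forall>a\<in>JV T F K. \<forall>b\<in>JV T F K. johnson_adj K a b = (a \<noteq> b \<and> b \<noteq> (T - a) \<union> F)"
  proof (intro ballI)
    fix A B assume A: "A \<in> JV T F K" and B: "B \<in> JV T F K"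
    have s: "F \<subseteq> A" "A \<subseteq> T" "card A = K" "F \<subseteq> B" "B \<subseteq> T" "card B = K" using A B by (auto simp: JV_def)
    have fB: "finite B" "finite A" using finite_subset[OF s(5) assms(1)] finite_subset[OF s(2) assms(1)] by auto
    show "johnson_adj K A B = (A \<noteq> B \<and> B \<noteq> (T - A) \<union> F)"
    proof
      assume adj: "johnson_adj K A B"
      have ci: "card (A \<inter> B) + 1 = K" using adj unfolding johnson_adj_def .
      have "A \<noteq> B"
      proof
        assume "A = B"
        then have "A \<inter> B = A" by simp
        then show False using ci s(3) by simp
      qed
      moreover have "B \<noteq> (T - A) \<union> F"
      proof
        assume "B = (T - A) \<union> F" then have "A \<inter> B = F" using inter[OF A] by (simp only:)
        then show False using ci assms(4) by simp
      qed
      ultimately show "A \<noteq> B \<and> B \<noteq> (T - A) \<union> F" by blast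
    next
      assume nb: "A \<noteq> B \<and> B \<noteq> (T - A) \<union> F"
      have lo: "card (A \<inter> B) < K" "card F \<le> card (A \<inter> B)" using JV_eq_low[OF A B _ assms(1)] nb by auto
      have "card (A \<inter> B) \<noteq> card F"
      proof
        assume c: "card (A \<inter> B) = card F"
        have FAB: "F \<subseteq> A \<inter> B" using s by blast
        have "finite (A \<inter> B)" using fB by blast
        then have "F = A \<inter> B" using card_subset_eq[OF _ FAB] c by simp
        then have sub: "B \<subseteq> (T - A) \<union> F" using s(5) by blast
        have "card B = card ((T - A) \<union> F)" using mem[OF A] s(6) by (simp add: JV_def)
        moreover have "finite ((T - A) \<union> F)" using assms(1) fF by blast
        ultimately have "B = (T - A) \<union> F" using card_subset_eq[OF _ sub] by simp
        then show False using nb by simp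
      qed
      then have "card (A \<inter> B) + 1 = K" using lo assms(4) by linarith
      then show "johnson_adj K A B" by (simp add: johnson_adj_def)
    qed
  qed
qed

lemma adj_sym: "johnson_adj K A B \<Longrightarrow> johnson_adj K B A"
  by (simp add: johnson_adj_def Int_commute)

lemma JV_mem: "A \<in> JV T F K \<longleftrightarrow> F \<subseteq> A \<and> A \<subseteq> T \<and> card A = K"
  by (simp add: JV_def)

lemma swap_JV: assumes "finite T" "A \<in> JV T G K" "s \<in> A" "s \<notin> G" "z \<in> T" "z \<notin> A"
  shows "insert z (A - {s}) \<in> JV T G K" "johnson_adj K A (insert z (A - {s}))"
proof -
  have s: "G \<subseteq> A" "A \<subseteq> T" "card A = K" using assms(2) by (auto simp: JV_def)
  have fA: "finite A" using finite_subset[OF s(2) assms(1)] .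
  show "insert z (A - {s}) \<in> JV T G K" using swap_card(1)[OF fA assms(3,6)] s assms by (auto simp: JV_def)
  show "johnson_adj K A (insert z (A - {s}))" using swap_card(2)[OF fA assms(3,6)] s by simp
qed

lemma other_vertex: assumes "finite T" "a \<in> JV T G K" "card G < K" "K < card T"
  shows "\<exists>a'. a' \<in> JV T G K \<and> a' \<noteq> a"
proof -
  have s: "G \<subseteq> a" "a \<subseteq> T" "card a = K" using assms(2) by (auto simp: JV_def)
  have fG: "finite G" using finite_subset[OF _ assms(1)] s by blast
  have "\<exists>t\<in>a. t \<notin> G" using avoid[OF fG, of a] s assms(3) by simp
  then obtain t where t: "t \<in> a" "t \<notin> G" by blast
  have "\<exists>z\<in>T. z \<notin> a" using avoid[OF finite_subset[OF s(2) assms(1)], of T] s assms(4) by simp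
  then obtain z where z: "z \<in> T" "z \<notin> a" by blast
  show ?thesis using swap_JV(1)[OF assms(1,2) t z] z by auto
qed

lemma down_nb: assumes "finite T" "a \<in> JV T (insert e F) K" "e \<notin> F" "K + 2 \<le> card T"
  shows "\<exists>b. b \<in> JV (T - {e}) F K \<and> johnson_adj K a b \<and> b \<noteq> w"
proof -
  have s: "insert e F \<subseteq> a" "a \<subseteq> T" "card a = K" using assms(2) by (auto simp: JV_def)
  have fa: "finite a" using finite_subset[OF s(2) assms(1)] .
  obtain z1 z2 where z: "z1 \<in> T" "z2 \<in> T" "z1 \<noteq> z2" "z1 \<notin> a" "z2 \<notin> a"
    using avoid2[OF fa, of T] s assms(4) by auto
  have ne: "insert z1 (a - {e}) \<noteq> insert z2 (a - {e})" using z by auto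
  have ok: "insert z (a - {e}) \<in> JV (T - {e}) F K \<and> johnson_adj K a (insert z (a - {e}))"
    if "z \<in> T" "z \<notin> a" for z
  proof -
    have "insert z (a - {e}) \<in> JV T (insert e F) K \<Longrightarrow> False" if "e \<in> F" using assms(3) that by simp
    have m: "insert z (a - {e}) \<in> JV T F K"
      using swap_JV(1)[OF assms(1), of a F K e z] s assms(3) that by (auto simp: JV_def)
    moreover have "e \<notin> insert z (a - {e})" using that s by auto
    ultimately have "insert z (a - {e}) \<in> JV (T - {e}) F K" by (auto simp: JV_def)
    moreover have "johnson_adj K a (insert z (a - {e}))"
      using swap_JV(2)[OF assms(1), of a F K e z] s assms(3) that by (auto simp: JV_def)
    ultimately show ?thesis by blast
  qed
  show ?thesis
  proof (cases "insert z1 (a - {e}) = w")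
    case True
    then have "insert z2 (a - {e}) \<noteq> w" using ne by simp
    then show ?thesis using ok[OF z(2,5)] by blast
  next
    case False
    then show ?thesis using ok[OF z(1,4)] by blast
  qed
qed

lemma up_nb: assumes "finite T" "b \<in> JV (T - {e}) F K" "e \<in> T" "e \<notin> F" "card F + 2 \<le> K"
  shows "\<exists>a. a \<in> JV T (insert e F) K \<and> johnson_adj K a b \<and> a \<noteq> w"
proof -
  have s: "F \<subseteq> b" "b \<subseteq> T - {e}" "card b = K" using assms(2) by (auto simp: JV_def)
  have fF: "finite F" using finite_subset[OF _ assms(1)] s by blast
  obtain t1 t2 where t: "t1 \<in> b" "t2 \<in> b" "t1 \<noteq> t2" "t1 \<notin> F" "t2 \<notin> F"
    using avoid2[OF fF, of b] s assms(5) by auto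
  have ne: "insert e (b - {t1}) \<noteq> insert e (b - {t2})" using t s by auto
  have ok: "insert e (b - {t}) \<in> JV T (insert e F) K \<and> johnson_adj K (insert e (b - {t})) b"
    if "t \<in> b" "t \<notin> F" for t
  proof -
    have bT: "b \<in> JV T F K" using s by (auto simp: JV_def)
    have eb: "e \<notin> b" using s by auto
    have m: "insert e (b - {t}) \<in> JV T F K" using swap_JV(1)[OF assms(1) bT that assms(3) eb] .
    have "johnson_adj K b (insert e (b - {t}))" using swap_JV(2)[OF assms(1) bT that assms(3) eb] .
    then show ?thesis using m by (auto simp: JV_def adj_sym)
  qed
  show ?thesis
  proof (cases "insert e (b - {t1}) = w")
    case True
    then have "insert e (b - {t2}) \<noteq> w" using ne by simp
    then show ?thesis using ok[OF t(2,5)] by blast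
  next
    case False
    then show ?thesis using ok[OF t(1,4)] by blast
  qed
qed

lemma JV_parts: assumes "e \<in> T" "e \<notin> F" "A \<in> JV T F K"
  shows "e \<in> A \<Longrightarrow> A \<in> JV T (insert e F) K" "e \<notin> A \<Longrightarrow> A \<in> JV (T - {e}) F K"
  using assms by (auto simp: JV_def)

lemma JV_sub: "JV (T - {e}) F K \<subseteq> JV T F K" "e \<in> T \<Longrightarrow> JV T (insert e F) K \<subseteq> JV T F K"
  by (auto simp: JV_def)

lemma diff_elem: assumes "finite T" "u \<in> JV T F K" "v \<in> JV T F K" "u \<noteq> v"
  shows "\<exists>e. e \<in> u \<and> e \<notin> v \<and> e \<in> T \<and> e \<notin> F"
proof -
  have s: "F \<subseteq> u" "u \<subseteq> T" "card u = K" "F \<subseteq> v" "v \<subseteq> T" "card v = K" using assms by (auto simp: JV_def)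
  have fv: "finite v" using finite_subset[OF s(5) assms(1)] .
  have "\<not> u \<subseteq> v"
  proof
    assume "u \<subseteq> v" then have "u = v" using card_subset_eq[OF fv] s by simp
    then show False using assms(4) by simp
  qed
  then obtain e where "e \<in> u" "e \<notin> v" by blast
  then show ?thesis using s by blast
qed

lemma sub_params: assumes "finite T" "F \<subseteq> T" "e \<in> T" "e \<notin> F"
  shows "card (T - {e}) = card T - 1" "card (insert e F) = Suc (card F)" "F \<subseteq> T - {e}" "insert e F \<subseteq> T"
    "card (T - {e}) - card F < card T - card F" "card T - card (insert e F) < card T - card F"
proof -
  have fF: "finite F" using finite_subset[OF assms(2,1)] .
  show c1: "card (T - {e}) = card T - 1" using assms by simp
  show c2: "card (insert e F) = Suc (card F)" using fF assms by simp
  show "F \<subseteq> T - {e}" "insert e F \<subseteq> T" using assms by auto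
  have "card F < card T" using psubset_card_mono[OF assms(1)] assms by blast
  then show "card (T - {e}) - card F < card T - card F" "card T - card (insert e F) < card T - card F"
    using c1 c2 by auto
qed

theorem hamc_JV: assumes "finite T" "F \<subseteq> T" "card F < K" "K < card T"
  shows "hamc (JV T F K) (johnson_adj K)"
  using assms
proof (induction "card T - card F" arbitrary: T F rule: less_induct)
  case less
  note fT = less.prems(1)
  consider "K = Suc (card F)" | "Suc K = card T" | "Suc (Suc (card F)) \<le> K" "K + 2 \<le> card T"
    using less.prems by linarith
  then show ?case
  proof cases
    case 1 then show ?thesis using complete_hamc[OF JV_finite[OF fT] JV_complete1[OF fT]] by simp
  next
    case 2 then show ?thesis using complete_hamc[OF JV_finite[OF fT] JV_complete2[OF fT]] by simp
  next
    case 3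
    show ?thesis unfolding hamc_def
    proof (intro ballI impI)
      fix u v assume uv: "u \<in> JV T F K" "v \<in> JV T F K" "u \<noteq> v"
      obtain e where e: "e \<in> u" "e \<notin> v" "e \<in> T" "e \<notin> F" using diff_elem[OF fT uv] by blast
      note sp = sub_params[OF fT less.prems(2) e(3,4)]
      define V0 where "V0 = JV (T - {e}) F K"
      define V1 where "V1 = JV T (insert e F) K"
      have h0: "hamc V0 (johnson_adj K)" unfolding V0_def
        using less.hyps[OF sp(5)] fT sp less.prems 3 by auto
      have h1: "hamc V1 (johnson_adj K)" unfolding V1_def
        using less.hyps[OF sp(6)] fT sp less.prems 3 by auto
      have split: "JV T F K = V0 \<union> V1" "V0 \<inter> V1 = {}" unfolding V0_def V1_def using JV_split e by auto
      have u1: "u \<in> V1" unfolding V1_def using JV_parts(1)[OF e(3,4) uv(1) e(1)] .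
      have v0: "v \<in> V0" unfolding V0_def using JV_parts(2)[OF e(3,4) uv(2) e(2)] .
      have "\<exists>a'. a' \<in> JV T (insert e F) K \<and> a' \<noteq> u"
        using other_vertex[OF fT u1[unfolded V1_def]] sp 3 less.prems by simp
      then obtain a where a: "a \<in> V1" "a \<noteq> u" unfolding V1_def by blast
      obtain b where b: "b \<in> V0" "johnson_adj K a b" "b \<noteq> v"
        using down_nb[OF fT a(1)[unfolded V1_def] e(4), of v] 3 unfolding V0_def by auto
      obtain P1 where P1: "is_path V1 (johnson_adj K) P1 u a" "set P1 = V1"
        using h1 u1 a unfolding hamc_def by metis
      obtain P2 where P2: "is_path V0 (johnson_adj K) P2 b v" "set P2 = V0"
        using h0 v0 b unfolding hamc_def by metis
      have "is_path (JV T F K) (johnson_adj K) (P1 @ P2) u v"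
        using is_path_append[OF is_path_mono[OF P1(1)] is_path_mono[OF P2(1)]] split P1(2) P2(2) b(2)
        by auto
      moreover have "set (P1 @ P2) = JV T F K" using split P1 P2 by auto
      ultimately show "\<exists>P. is_path (JV T F K) (johnson_adj K) P u v \<and> set P = JV T F K" by blast
    qed
  qed
qed

lemma is_path_set: "is_path W E p u v \<Longrightarrow> set p \<subseteq> W"
  by (simp add: is_path_def)

lemma p2c_use: "paired_2_coverable W E \<Longrightarrow> u \<in> W \<Longrightarrow> v \<in> W \<Longrightarrow> x \<in> W \<Longrightarrow> y \<in> W \<Longrightarrow> distinct [u,v,x,y]
  \<Longrightarrow> \<exists>P Q. is_path W E P u v \<and> is_path W E Q x y \<and> set P \<inter> set Q = {} \<and> set P \<union> set Q = W"
  unfolding paired_2_coverable_def by blast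

lemma hamc_use: "hamc W E \<Longrightarrow> u \<in> W \<Longrightarrow> v \<in> W \<Longrightarrow> u \<noteq> v \<Longrightarrow> \<exists>P. is_path W E P u v \<and> set P = W"
  unfolding hamc_def by blast

locale stp =
  fixes T F :: "nat set" and K :: nat and e :: nat
  assumes fT: "finite T" and FT: "F \<subseteq> T" and eT: "e \<in> T" and eF: "e \<notin> F"
    and lo: "card F + 2 \<le> K" and hi: "K + 2 \<le> card T" and big: "card F + 5 \<le> card T"
    and p0: "paired_2_coverable (JV (T - {e}) F K) (johnson_adj K)"
    and p1: "paired_2_coverable (JV T (insert e F) K) (johnson_adj K)"
begin

abbreviation "V \<equiv> JV T F K"
abbreviation "V0 \<equiv> JV (T - {e}) F K"
abbreviation "V1 \<equiv> JV T (insert e F) K"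
abbreviation "E \<equiv> johnson_adj K"

lemma fF: "finite F" using finite_subset[OF FT fT] .

lemma sp: "card (T - {e}) = card T - 1" "card (insert e F) = Suc (card F)" "F \<subseteq> T - {e}" "insert e F \<subseteq> T"
  using sub_params[OF fT FT eT eF] by auto

lemma h0: "hamc V0 E"
  using hamc_JV[of "T - {e}" F K] fT sp lo hi by auto

lemma h1: "hamc V1 E"
  using hamc_JV[of T "insert e F" K] fT sp lo hi by auto

lemma split: "V = V0 \<union> V1" "V0 \<inter> V1 = {}" using JV_split eT eF by auto

lemma c0: "4 \<le> card V0"
proof -
  have "card (T - {e}) - card F \<le> card V0" using fT sp lo hi by (intro JV_card_ge) auto
  then show ?thesis using sp big by linarith
qed

lemma c1: "4 \<le> card V1"
proof -
  have "card T - card (insert e F) \<le> card V1" using fT sp lo hi by (intro JV_card_ge) auto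
  then show ?thesis using sp big by linarith
qed

lemma card3: "card {a,b,c} \<le> 3"
  using card_length[of "[a,b,c]"] by simp

lemma card2: "card {a,b} \<le> 2"
  using card_length[of "[a,b]"] by simp

lemma esym: "E a b \<Longrightarrow> E b a" by (rule adj_sym)

lemma caseA: assumes "u \<in> V1" "v \<in> V0" "x \<in> V0" "y \<in> V0" "distinct [u,v,x,y]"
  shows "good V E u v x y"
proof -
  have "\<exists>b\<in>V0. b \<notin> {v,x,y}" by (rule avoid) (use c0 card3[of v x y] in auto)
  then obtain b where b: "b \<in> V0" "b \<notin> {v,x,y}" by blast
  have db: "distinct [b,v,x,y]" using b assms(5) by auto
  obtain a where a: "a \<in> V1" "E a b" "a \<noteq> u" using up_nb[OF fT b(1) eT eF lo, of u] by blast
  obtain H where H: "is_path V1 E H u a" "set H = V1" using hamc_use[OF h1 assms(1) a(1)] a by metis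
  obtain P2 Q where PQ: "is_path V0 E P2 b v" "is_path V0 E Q x y" "set P2 \<inter> set Q = {}" "set P2 \<union> set Q = V0"
    using p2c_use[OF p0 b(1) assms(2,3,4) db] by blast
  have "set H \<inter> set P2 = {}" using H(2) is_path_set[OF PQ(1)] split by auto
  then have "is_path V E (H @ P2) u v"
    using is_path_append[OF is_path_mono[OF H(1) JV_sub(2)[OF eT]] is_path_mono[OF PQ(1) JV_sub(1)] _ a(2)]
    by blast
  moreover have "is_path V E Q x y" using is_path_mono[OF PQ(2) JV_sub(1)] .
  moreover have "set (H @ P2) \<inter> set Q = {}" using H(2) PQ(3) is_path_set[OF PQ(2)] split(2) by auto
  moreover have "set (H @ P2) \<union> set Q = V" using H(2) PQ(4) split(1) by auto
  ultimately show ?thesis unfolding good_def by blast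
qed


lemma caseB: assumes "u \<in> V1" "v \<in> V0" "x \<in> V1" "y \<in> V1" "distinct [u,v,x,y]"
  shows "good V E u v x y"
proof -
  have "\<exists>a\<in>V1. a \<notin> {u,x,y}" by (rule avoid) (use c1 card3[of u x y] in auto)
  then obtain a where a: "a \<in> V1" "a \<notin> {u,x,y}" by blast
  have da: "distinct [u,a,x,y]" using a assms(5) by auto
  obtain b where b: "b \<in> V0" "E a b" "b \<noteq> v" using down_nb[OF fT a(1) eF hi, of v] by blast
  obtain H where H: "is_path V0 E H b v" "set H = V0" using hamc_use[OF h0 b(1) assms(2) b(3)] by blast
  obtain P1 Q where PQ: "is_path V1 E P1 u a" "is_path V1 E Q x y" "set P1 \<inter> set Q = {}" "set P1 \<union> set Q = V1"
    using p2c_use[OF p1 assms(1) a(1) assms(3,4) da] by blast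
  have "set P1 \<inter> set H = {}" using H(2) is_path_set[OF PQ(1)] split by auto
  then have "is_path V E (P1 @ H) u v"
    using is_path_append[OF is_path_mono[OF PQ(1) JV_sub(2)[OF eT]] is_path_mono[OF H(1) JV_sub(1)] _ b(2)]
    by blast
  moreover have "is_path V E Q x y" using is_path_mono[OF PQ(2) JV_sub(2)[OF eT]] .
  moreover have "set (P1 @ H) \<inter> set Q = {}" using H(2) PQ(3) is_path_set[OF PQ(2)] split(2) by auto
  moreover have "set (P1 @ H) \<union> set Q = V" using H(2) PQ(4) split(1) by auto
  ultimately show ?thesis unfolding good_def by blast
qed

lemma caseD: assumes "u \<in> V1" "v \<in> V1" "x \<in> V0" "y \<in> V0" "distinct [u,v,x,y]"
  shows "good V E u v x y"
proof -
  obtain H1 where H1: "is_path V1 E H1 u v" "set H1 = V1" using hamc_use[OF h1 assms(1,2)] assms(5) by auto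
  obtain H0 where H0: "is_path V0 E H0 x y" "set H0 = V0" using hamc_use[OF h0 assms(3,4)] assms(5) by auto
  have "is_path V E H1 u v" using is_path_mono[OF H1(1) JV_sub(2)[OF eT]] .
  moreover have "is_path V E H0 x y" using is_path_mono[OF H0(1) JV_sub(1)] .
  moreover have "set H1 \<inter> set H0 = {}" using H1(2) H0(2) split(2) by auto
  moreover have "set H1 \<union> set H0 = V" using H1(2) H0(2) split(1) by auto
  ultimately show ?thesis unfolding good_def by blast
qed

lemma adj_card: "E p p' \<Longrightarrow> card (p \<inter> p') + 1 = K" by (simp add: johnson_adj_def)

lemma up_pair: assumes "p \<in> V0" "p' \<in> V0" "E p p'"
  shows "\<exists>a a'. a \<in> V1 \<and> a' \<in> V1 \<and> a \<noteq> a' \<and> E p a \<and> E a' p'"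
proof -
  have s: "F \<subseteq> p" "p \<subseteq> T - {e}" "card p = K" "F \<subseteq> p'" "p' \<subseteq> T - {e}" "card p' = K"
    using assms(1,2) by (auto simp: JV_def)
  have ci: "card (p \<inter> p') + 1 = K" using adj_card[OF assms(3)] .
  have "\<exists>t\<in>p \<inter> p'. t \<notin> F" by (rule avoid[OF fF]) (use ci lo in linarith)
  then obtain t where t: "t \<in> p" "t \<in> p'" "t \<notin> F" by blast
  have pV: "p \<in> V" "p' \<in> V" using assms(1,2) by (auto simp: JV_def)
  have ep: "e \<notin> p" "e \<notin> p'" using s by auto
  have a1: "insert e (p - {t}) \<in> V" "E p (insert e (p - {t}))" using swap_JV[OF fT pV(1) t(1) t(3) eT ep(1)] by auto
  have a2: "insert e (p' - {t}) \<in> V" "E p' (insert e (p' - {t}))" using swap_JV[OF fT pV(2) t(2) t(3) eT ep(2)] by auto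
  have m1: "insert e (p - {t}) \<in> V1" using JV_parts(1)[OF eT eF a1(1)] by simp
  have m2: "insert e (p' - {t}) \<in> V1" using JV_parts(1)[OF eT eF a2(1)] by simp
  have pp: "p \<noteq> p'"
  proof
    assume "p = p'" then have "p \<inter> p' = p" by simp
    then show False using ci s(3) by simp
  qed
  have r1: "insert t (insert e (p - {t}) - {e}) = p" using t ep by auto
  have r2: "insert t (insert e (p' - {t}) - {e}) = p'" using t ep by auto
  have ne: "insert e (p - {t}) \<noteq> insert e (p' - {t})"
  proof
    assume "insert e (p - {t}) = insert e (p' - {t})"
    then have "insert t (insert e (p - {t}) - {e}) = insert t (insert e (p' - {t}) - {e})" by (rule arg_cong)
    then show False using r1 r2 pp by simp
  qed
  show ?thesis using m1 m2 ne a1(2) adj_sym[OF a2(2)] by blast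
qed

lemma down_pair: assumes "p \<in> V1" "p' \<in> V1" "E p p'"
  shows "\<exists>b b'. b \<in> V0 \<and> b' \<in> V0 \<and> b \<noteq> b' \<and> E p b \<and> E b' p'"
proof -
  have s: "insert e F \<subseteq> p" "p \<subseteq> T" "card p = K" "insert e F \<subseteq> p'" "p' \<subseteq> T" "card p' = K"
    using assms(1,2) by (auto simp: JV_def)
  have f: "finite p" "finite p'" using finite_subset[OF s(2) fT] finite_subset[OF s(5) fT] by auto
  have ci: "card (p \<inter> p') + 1 = K" using adj_card[OF assms(3)] .
  have "card (p \<union> p') + card (p \<inter> p') = card p + card p'" using card_Un_Int f by metis
  then have cu: "card (p \<union> p') < card T" using ci s hi by linarith
  have "\<exists>z\<in>T. z \<notin> p \<union> p'" by (rule avoid) (use f cu in auto)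
  then obtain z where z: "z \<in> T" "z \<notin> p" "z \<notin> p'" by blast
  have pV: "p \<in> V" "p' \<in> V" using assms(1,2) by (auto simp: JV_def)
  have ep: "e \<in> p" "e \<in> p'" using s by auto
  have b1: "insert z (p - {e}) \<in> V" "E p (insert z (p - {e}))" using swap_JV[OF fT pV(1) ep(1) eF z(1,2)] by auto
  have b2: "insert z (p' - {e}) \<in> V" "E p' (insert z (p' - {e}))" using swap_JV[OF fT pV(2) ep(2) eF z(1,3)] by auto
  have zne: "z \<noteq> e" using z ep by auto
  have m1: "insert z (p - {e}) \<in> V0" using JV_parts(2)[OF eT eF b1(1)] zne by simp
  have m2: "insert z (p' - {e}) \<in> V0" using JV_parts(2)[OF eT eF b2(1)] zne by simp
  have pp: "p \<noteq> p'"
  proof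
    assume "p = p'" then have "p \<inter> p' = p" by simp
    then show False using ci s(3) by simp
  qed
  have r1: "insert e (insert z (p - {e}) - {z}) = p" using z ep by auto
  have r2: "insert e (insert z (p' - {e}) - {z}) = p'" using z ep by auto
  have ne: "insert z (p - {e}) \<noteq> insert z (p' - {e})"
  proof
    assume "insert z (p - {e}) = insert z (p' - {e})"
    then have "insert e (insert z (p - {e}) - {z}) = insert e (insert z (p' - {e}) - {z})" by (rule arg_cong)
    then show False using r1 r2 pp by simp
  qed
  show ?thesis using m1 m2 ne b1(2) adj_sym[OF b2(2)] by blast
qed

lemma caseE0: assumes "u \<in> V0" "v \<in> V0" "x \<in> V0" "y \<in> V0" "distinct [u,v,x,y]"
  shows "good V E u v x y"
proof -
  obtain P Q where PQ: "is_path V0 E P u v" "is_path V0 E Q x y" "set P \<inter> set Q = {}" "set P \<union> set Q = V0"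
    using p2c_use[OF p0 assms] by blast
  obtain P' where P': "P = u # P'" "P' \<noteq> []" using is_path_neq[OF PQ(1)] assms(5) by auto
  note pc = is_path_Cons[OF PQ(1)[unfolded P'(1)] P'(2)]
  have hd0: "hd P' \<in> V0" using is_path_set[OF pc[THEN conjunct1]] P'(2) hd_in_set by blast
  obtain a a' where aa: "a \<in> V1" "a' \<in> V1" "a \<noteq> a'" "E u a" "E a' (hd P')"
    using up_pair[OF assms(1) hd0] pc by blast
  obtain H where H: "is_path V1 E H a a'" "set H = V1" using hamc_use[OF h1 aa(1,2,3)] by blast
  have dj: "set H \<inter> set (u # P') = {}" using H(2) is_path_set[OF PQ(1)] P'(1) split(2) by auto
  have "is_path V E (u # H @ P') u v"
    using absorb[OF is_path_mono[OF PQ(1)[unfolded P'(1)] JV_sub(1)] P'(2) is_path_mono[OF H(1) JV_sub(2)[OF eT]] dj aa(4,5)] .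
  moreover have "is_path V E Q x y" using is_path_mono[OF PQ(2) JV_sub(1)] .
  moreover have "set (u # H @ P') \<inter> set Q = {}" using H(2) PQ(3) P'(1) is_path_set[OF PQ(2)] split(2) by auto
  moreover have "set (u # H @ P') \<union> set Q = V" using H(2) PQ(4) P'(1) split(1) by auto
  ultimately show ?thesis unfolding good_def by blast
qed

lemma caseE1: assumes "u \<in> V1" "v \<in> V1" "x \<in> V1" "y \<in> V1" "distinct [u,v,x,y]"
  shows "good V E u v x y"
proof -
  obtain P Q where PQ: "is_path V1 E P u v" "is_path V1 E Q x y" "set P \<inter> set Q = {}" "set P \<union> set Q = V1"
    using p2c_use[OF p1 assms] by blast
  obtain P' where P': "P = u # P'" "P' \<noteq> []" using is_path_neq[OF PQ(1)] assms(5) by auto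
  note pc = is_path_Cons[OF PQ(1)[unfolded P'(1)] P'(2)]
  have hd0: "hd P' \<in> V1" using is_path_set[OF pc[THEN conjunct1]] P'(2) hd_in_set by blast
  obtain a a' where aa: "a \<in> V0" "a' \<in> V0" "a \<noteq> a'" "E u a" "E a' (hd P')"
    using down_pair[OF assms(1) hd0] pc by blast
  obtain H where H: "is_path V0 E H a a'" "set H = V0" using hamc_use[OF h0 aa(1,2,3)] by blast
  have dj: "set H \<inter> set (u # P') = {}" using H(2) is_path_set[OF PQ(1)] P'(1) split(2) by auto
  have "is_path V E (u # H @ P') u v"
    using absorb[OF is_path_mono[OF PQ(1)[unfolded P'(1)] JV_sub(2)[OF eT]] P'(2) is_path_mono[OF H(1) JV_sub(1)] dj aa(4,5)] .
  moreover have "is_path V E Q x y" using is_path_mono[OF PQ(2) JV_sub(2)[OF eT]] .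
  moreover have "set (u # H @ P') \<inter> set Q = {}" using H(2) PQ(3) P'(1) is_path_set[OF PQ(2)] split(2) by auto
  moreover have "set (u # H @ P') \<union> set Q = V" using H(2) PQ(4) P'(1) split(1) by auto
  ultimately show ?thesis unfolding good_def by blast
qed

lemma Fz_edge: assumes "A \<in> JV (T - {z}) (insert e F) K" "z \<in> T" "z \<noteq> e"
  shows "insert z (A - {e}) \<in> V0 \<and> E A (insert z (A - {e})) \<and> insert e (insert z (A - {e}) - {z}) = A \<and> A \<in> V1"
proof -
  have s: "insert e F \<subseteq> A" "A \<subseteq> T - {z}" "card A = K" using assms(1) by (auto simp: JV_def)
  have AV: "A \<in> V" using s by (auto simp: JV_def)
  have ea: "e \<in> A" "z \<notin> A" using s by auto
  have b: "insert z (A - {e}) \<in> V" "E A (insert z (A - {e}))" using swap_JV[OF fT AV ea(1) eF assms(2) ea(2)] by auto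
  have "insert z (A - {e}) \<in> V0" using JV_parts(2)[OF eT eF b(1)] assms(3) by simp
  moreover have "insert e (insert z (A - {e}) - {z}) = A" using ea by auto
  moreover have "A \<in> V1" using s by (auto simp: JV_def)
  ultimately show ?thesis using b(2) by blast
qed

lemma caseC: assumes big6: "card F + 6 \<le> card T" and a: "u \<in> V1" "v \<in> V0" "x \<in> V1" "y \<in> V0" "distinct [u,v,x,y]"
  shows "good V E u v x y"
proof -
  have su: "u \<subseteq> T" "card u = K" "x \<subseteq> T" "card x = K" "e \<in> u" "e \<in> x" using a by (auto simp: JV_def)
  have sv: "F \<subseteq> v" "F \<subseteq> y" "card v = K" "card y = K" "e \<notin> v" "e \<notin> y" "v \<subseteq> T" "y \<subseteq> T"
    using a by (auto simp: JV_def)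
  have fu: "finite u" "finite x" "finite v" "finite y"
    using finite_subset[OF su(1) fT] finite_subset[OF su(3) fT] finite_subset[OF sv(7) fT] finite_subset[OF sv(8) fT]
    by auto
  have ux: "u \<noteq> x" "v \<noteq> y" using a(5) by auto
  have "card (u \<inter> x) < K" using JV_eq_low(1)[OF a(1) a(3) ux(1) fT] .
  moreover have "card (u \<union> x) + card (u \<inter> x) = card u + card x" using card_Un_Int fu by metis
  moreover have "card (v \<inter> y) < K" using JV_eq_low(1)[OF a(2) a(4) ux(2)] fT by simp
  ultimately have cc: "card (v \<inter> y) + 2 \<le> card (u \<union> x)" using su by linarith
  obtain z1 z2 where zz: "z1 \<in> u \<union> x" "z2 \<in> u \<union> x" "z1 \<noteq> z2" "z1 \<notin> v \<inter> y" "z2 \<notin> v \<inter> y"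
    using avoid2[OF _ cc] fu by blast
  obtain z where z: "z \<in> u \<union> x" "z \<notin> v \<inter> y" "z \<noteq> e"
  proof (cases "z1 = e")
    case True then show ?thesis using that[of z2] zz by auto
  next
    case False then show ?thesis using that[of z1] zz by auto
  qed
  have zT: "z \<in> T" using z su by auto
  have zF: "z \<notin> F" using z sv by auto
  define Fz where "Fz = JV (T - {z}) (insert e F) K"
  have cF: "4 \<le> card Fz"
  proof -
    have "card (T - {z}) - card (insert e F) \<le> card Fz" unfolding Fz_def
      using fT sp lo hi zT zF z(3) eT FT by (intro JV_card_ge) auto
    moreover have "card (T - {z}) = card T - 1" using zT fT by simp
    ultimately show ?thesis using sp big6 by linarith
  qed
  define iv where "iv = insert e (v - {z})"
  define iy where "iy = insert e (y - {z})"
  define p where "p = (if z \<in> u then x else u)"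
  define q where "q = (if z \<in> v then iv else iy)"
  have Fzs: "z \<notin> A" "card A = K" if "A \<in> Fz" for A using that unfolding Fz_def by (auto simp: JV_def)
  have civ: "card iv \<noteq> K" if "z \<notin> v"
  proof -
    have "iv = insert e v" using that unfolding iv_def by auto
    then show ?thesis using sv fu by simp
  qed
  have ciy: "card iy \<noteq> K" if "z \<notin> y"
  proof -
    have "iy = insert e y" using that unfolding iy_def by auto
    then show ?thesis using sv fu by simp
  qed
  have bad: "A = p \<or> A = q" if "A \<in> Fz" "A \<in> {u,x,iv,iy}" for A
  proof -
    have "A = u \<or> A = x \<or> A = iv \<or> A = iy" using that(2) by simp
    then show ?thesis
    proof (elim disjE)
      assume "A = u" then show ?thesis using Fzs[OF that(1)] unfolding p_def by auto
    next
      assume "A = x" then show ?thesis using Fzs[OF that(1)] z(1) unfolding p_def by auto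
    next
      assume "A = iv" then show ?thesis using Fzs[OF that(1)] civ unfolding q_def by auto
    next
      assume "A = iy" then show ?thesis using Fzs[OF that(1)] ciy z(2) unfolding q_def by auto
    qed
  qed
  have "\<exists>A1\<in>Fz. \<exists>A2\<in>Fz. A1 \<noteq> A2 \<and> A1 \<notin> {p,q} \<and> A2 \<notin> {p,q}"
    using avoid2[of "{p,q}" Fz] cF card2[of p q] by simp
  then obtain A1 A2 where A: "A1 \<in> Fz" "A2 \<in> Fz" "A1 \<noteq> A2" "A1 \<notin> {p,q}" "A2 \<notin> {p,q}" by blast
  have nb1: "A1 \<notin> {u,x,iv,iy}" using bad[OF A(1)] A(4) by blast
  have nb2: "A2 \<notin> {u,x,iv,iy}" using bad[OF A(2)] A(5) by blast
  define b1 where "b1 = insert z (A1 - {e})"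
  define b2 where "b2 = insert z (A2 - {e})"
  have e1: "b1 \<in> V0" "E A1 b1" "insert e (b1 - {z}) = A1" "A1 \<in> V1"
    using Fz_edge[OF A(1)[unfolded Fz_def] zT z(3)] unfolding b1_def by blast+
  have e2: "b2 \<in> V0" "E A2 b2" "insert e (b2 - {z}) = A2" "A2 \<in> V1"
    using Fz_edge[OF A(2)[unfolded Fz_def] zT z(3)] unfolding b2_def by blast+
  have "b1 \<noteq> b2"
  proof
    assume "b1 = b2" then have "insert e (b1 - {z}) = insert e (b2 - {z})" by simp
    then have "A1 = A2" using e1(3) e2(3) by simp
    then show False using A(3) by simp
  qed
  moreover have "b1 \<noteq> v"
  proof
    assume "b1 = v" then have hh: "insert e (b1 - {z}) = iv" unfolding iv_def by simp
    have "A1 = iv" using trans[OF sym[OF e1(3)] hh] .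
    then show False using nb1 by blast
  qed
  moreover have "b2 \<noteq> v"
  proof
    assume "b2 = v" then have hh: "insert e (b2 - {z}) = iv" unfolding iv_def by simp
    have "A2 = iv" using trans[OF sym[OF e2(3)] hh] .
    then show False using nb2 by blast
  qed
  moreover have "b1 \<noteq> y"
  proof
    assume "b1 = y" then have hh: "insert e (b1 - {z}) = iy" unfolding iy_def by simp
    have "A1 = iy" using trans[OF sym[OF e1(3)] hh] .
    then show False using nb1 by blast
  qed
  moreover have "b2 \<noteq> y"
  proof
    assume "b2 = y" then have hh: "insert e (b2 - {z}) = iy" unfolding iy_def by simp
    have "A2 = iy" using trans[OF sym[OF e2(3)] hh] .
    then show False using nb2 by blast
  qed
  moreover have "v \<noteq> y" using a(5) by simp
  ultimately have d0: "distinct [b1, v, b2, y]" by simp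
  have "u \<noteq> A1" "A1 \<noteq> x" "u \<noteq> A2" "x \<noteq> A2" using nb1 nb2 by blast+
  moreover have "u \<noteq> x" using a(5) by simp
  ultimately have d1: "distinct [u, A1, x, A2]" using A(3) by simp
  obtain P1 Q1 where PQ1: "is_path V1 E P1 u A1" "is_path V1 E Q1 x A2" "set P1 \<inter> set Q1 = {}" "set P1 \<union> set Q1 = V1"
    using p2c_use[OF p1 a(1) e1(4) a(3) e2(4) d1] by blast
  obtain P2 Q2 where PQ2: "is_path V0 E P2 b1 v" "is_path V0 E Q2 b2 y" "set P2 \<inter> set Q2 = {}" "set P2 \<union> set Q2 = V0"
    using p2c_use[OF p0 e1(1) a(2) e2(1) a(4) d0] by blast
  have s1: "set P1 \<subseteq> V1" "set Q1 \<subseteq> V1" using is_path_set PQ1 by metis+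
  have s2: "set P2 \<subseteq> V0" "set Q2 \<subseteq> V0" using is_path_set PQ2 by metis+
  have dj: "set P1 \<inter> set P2 = {}" "set Q1 \<inter> set Q2 = {}" using s1 s2 split(2) by auto
  have "is_path V E (P1 @ P2) u v"
    using is_path_append[OF is_path_mono[OF PQ1(1) JV_sub(2)[OF eT]] is_path_mono[OF PQ2(1) JV_sub(1)] dj(1) e1(2)] .
  moreover have "is_path V E (Q1 @ Q2) x y"
    using is_path_append[OF is_path_mono[OF PQ1(2) JV_sub(2)[OF eT]] is_path_mono[OF PQ2(2) JV_sub(1)] dj(2) e2(2)] .
  moreover have "set (P1 @ P2) \<inter> set (Q1 @ Q2) = {}" using PQ1(3) PQ2(3) s1 s2 split(2) by auto
  moreover have "set (P1 @ P2) \<union> set (Q1 @ Q2) = V" using PQ1(4) PQ2(4) split(1) by auto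
  ultimately show ?thesis unfolding good_def by blast
qed
end

context stp
begin

lemma gs1: "good V E v u x y \<Longrightarrow> good V E u v x y"
  using good_swap1[of E V v u x y] adj_sym by blast

lemma gs2: "good V E u v y x \<Longrightarrow> good V E u v x y"
  using good_swap2[of E V u v y x] adj_sym by blast

lemma noncross: assumes "u \<in> V" "v \<in> V" "x \<in> V" "y \<in> V" "distinct [u,v,x,y]"
  "\<not> ((e \<in> u) \<noteq> (e \<in> v) \<and> (e \<in> x) \<noteq> (e \<in> y))"
  shows "good V E u v x y"
proof -
  have P0: "e \<in> u \<Longrightarrow> e \<in> v \<Longrightarrow> e \<in> x \<Longrightarrow> e \<in> y \<Longrightarrow> good V E u v x y"
  proof -
    assume h: "e \<in> u" "e \<in> v" "e \<in> x" "e \<in> y"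
    have dd: "distinct [u, v, x, y]" using assms(5) by auto
    have g: "good V E u v x y" using caseE1[OF JV_parts(1)[OF eT eF assms(1) h(1)] JV_parts(1)[OF eT eF assms(2) h(2)] JV_parts(1)[OF eT eF assms(3) h(3)] JV_parts(1)[OF eT eF assms(4) h(4)] dd] .
    show ?thesis using g .
  qed
  have P1: "e \<in> u \<Longrightarrow> e \<in> v \<Longrightarrow> e \<in> x \<Longrightarrow> e \<notin> y \<Longrightarrow> good V E u v x y"
  proof -
    assume h: "e \<in> u" "e \<in> v" "e \<in> x" "e \<notin> y"
    have dd: "distinct [x, y, u, v]" using assms(5) by auto
    have g: "good V E x y u v" using caseB[OF JV_parts(1)[OF eT eF assms(3) h(3)] JV_parts(2)[OF eT eF assms(4) h(4)] JV_parts(1)[OF eT eF assms(1) h(1)] JV_parts(1)[OF eT eF assms(2) h(2)] dd] .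
    show ?thesis using good_swap3[OF g] .
  qed
  have P2: "e \<in> u \<Longrightarrow> e \<in> v \<Longrightarrow> e \<notin> x \<Longrightarrow> e \<in> y \<Longrightarrow> good V E u v x y"
  proof -
    assume h: "e \<in> u" "e \<in> v" "e \<notin> x" "e \<in> y"
    have dd: "distinct [y, x, u, v]" using assms(5) by auto
    have g: "good V E y x u v" using caseB[OF JV_parts(1)[OF eT eF assms(4) h(4)] JV_parts(2)[OF eT eF assms(3) h(3)] JV_parts(1)[OF eT eF assms(1) h(1)] JV_parts(1)[OF eT eF assms(2) h(2)] dd] .
    show ?thesis using gs2[OF good_swap3[OF g]] .
  qed
  have P3: "e \<in> u \<Longrightarrow> e \<in> v \<Longrightarrow> e \<notin> x \<Longrightarrow> e \<notin> y \<Longrightarrow> good V E u v x y"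
  proof -
    assume h: "e \<in> u" "e \<in> v" "e \<notin> x" "e \<notin> y"
    have dd: "distinct [u, v, x, y]" using assms(5) by auto
    have g: "good V E u v x y" using caseD[OF JV_parts(1)[OF eT eF assms(1) h(1)] JV_parts(1)[OF eT eF assms(2) h(2)] JV_parts(2)[OF eT eF assms(3) h(3)] JV_parts(2)[OF eT eF assms(4) h(4)] dd] .
    show ?thesis using g .
  qed
  have P4: "e \<in> u \<Longrightarrow> e \<notin> v \<Longrightarrow> e \<in> x \<Longrightarrow> e \<in> y \<Longrightarrow> good V E u v x y"
  proof -
    assume h: "e \<in> u" "e \<notin> v" "e \<in> x" "e \<in> y"
    have dd: "distinct [u, v, x, y]" using assms(5) by auto
    have g: "good V E u v x y" using caseB[OF JV_parts(1)[OF eT eF assms(1) h(1)] JV_parts(2)[OF eT eF assms(2) h(2)] JV_parts(1)[OF eT eF assms(3) h(3)] JV_parts(1)[OF eT eF assms(4) h(4)] dd] .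
    show ?thesis using g .
  qed
  have P5: "e \<in> u \<Longrightarrow> e \<notin> v \<Longrightarrow> e \<notin> x \<Longrightarrow> e \<notin> y \<Longrightarrow> good V E u v x y"
  proof -
    assume h: "e \<in> u" "e \<notin> v" "e \<notin> x" "e \<notin> y"
    have dd: "distinct [u, v, x, y]" using assms(5) by auto
    have g: "good V E u v x y" using caseA[OF JV_parts(1)[OF eT eF assms(1) h(1)] JV_parts(2)[OF eT eF assms(2) h(2)] JV_parts(2)[OF eT eF assms(3) h(3)] JV_parts(2)[OF eT eF assms(4) h(4)] dd] .
    show ?thesis using g .
  qed
  have P6: "e \<notin> u \<Longrightarrow> e \<in> v \<Longrightarrow> e \<in> x \<Longrightarrow> e \<in> y \<Longrightarrow> good V E u v x y"
  proof -
    assume h: "e \<notin> u" "e \<in> v" "e \<in> x" "e \<in> y"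
    have dd: "distinct [v, u, x, y]" using assms(5) by auto
    have g: "good V E v u x y" using caseB[OF JV_parts(1)[OF eT eF assms(2) h(2)] JV_parts(2)[OF eT eF assms(1) h(1)] JV_parts(1)[OF eT eF assms(3) h(3)] JV_parts(1)[OF eT eF assms(4) h(4)] dd] .
    show ?thesis using gs1[OF g] .
  qed
  have P7: "e \<notin> u \<Longrightarrow> e \<in> v \<Longrightarrow> e \<notin> x \<Longrightarrow> e \<notin> y \<Longrightarrow> good V E u v x y"
  proof -
    assume h: "e \<notin> u" "e \<in> v" "e \<notin> x" "e \<notin> y"
    have dd: "distinct [v, u, x, y]" using assms(5) by auto
    have g: "good V E v u x y" using caseA[OF JV_parts(1)[OF eT eF assms(2) h(2)] JV_parts(2)[OF eT eF assms(1) h(1)] JV_parts(2)[OF eT eF assms(3) h(3)] JV_parts(2)[OF eT eF assms(4) h(4)] dd] .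
    show ?thesis using gs1[OF g] .
  qed
  have P8: "e \<notin> u \<Longrightarrow> e \<notin> v \<Longrightarrow> e \<in> x \<Longrightarrow> e \<in> y \<Longrightarrow> good V E u v x y"
  proof -
    assume h: "e \<notin> u" "e \<notin> v" "e \<in> x" "e \<in> y"
    have dd: "distinct [x, y, u, v]" using assms(5) by auto
    have g: "good V E x y u v" using caseD[OF JV_parts(1)[OF eT eF assms(3) h(3)] JV_parts(1)[OF eT eF assms(4) h(4)] JV_parts(2)[OF eT eF assms(1) h(1)] JV_parts(2)[OF eT eF assms(2) h(2)] dd] .
    show ?thesis using good_swap3[OF g] .
  qed
  have P9: "e \<notin> u \<Longrightarrow> e \<notin> v \<Longrightarrow> e \<in> x \<Longrightarrow> e \<notin> y \<Longrightarrow> good V E u v x y"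
  proof -
    assume h: "e \<notin> u" "e \<notin> v" "e \<in> x" "e \<notin> y"
    have dd: "distinct [x, y, u, v]" using assms(5) by auto
    have g: "good V E x y u v" using caseA[OF JV_parts(1)[OF eT eF assms(3) h(3)] JV_parts(2)[OF eT eF assms(4) h(4)] JV_parts(2)[OF eT eF assms(1) h(1)] JV_parts(2)[OF eT eF assms(2) h(2)] dd] .
    show ?thesis using good_swap3[OF g] .
  qed
  have P10: "e \<notin> u \<Longrightarrow> e \<notin> v \<Longrightarrow> e \<notin> x \<Longrightarrow> e \<in> y \<Longrightarrow> good V E u v x y"
  proof -
    assume h: "e \<notin> u" "e \<notin> v" "e \<notin> x" "e \<in> y"
    have dd: "distinct [y, x, u, v]" using assms(5) by auto
    have g: "good V E y x u v" using caseA[OF JV_parts(1)[OF eT eF assms(4) h(4)] JV_parts(2)[OF eT eF assms(3) h(3)] JV_parts(2)[OF eT eF assms(1) h(1)] JV_parts(2)[OF eT eF assms(2) h(2)] dd] .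
    show ?thesis using gs2[OF good_swap3[OF g]] .
  qed
  have P11: "e \<notin> u \<Longrightarrow> e \<notin> v \<Longrightarrow> e \<notin> x \<Longrightarrow> e \<notin> y \<Longrightarrow> good V E u v x y"
  proof -
    assume h: "e \<notin> u" "e \<notin> v" "e \<notin> x" "e \<notin> y"
    have dd: "distinct [u, v, x, y]" using assms(5) by auto
    have g: "good V E u v x y" using caseE0[OF JV_parts(2)[OF eT eF assms(1) h(1)] JV_parts(2)[OF eT eF assms(2) h(2)] JV_parts(2)[OF eT eF assms(3) h(3)] JV_parts(2)[OF eT eF assms(4) h(4)] dd] .
    show ?thesis using g .
  qed

  show ?thesis using P0 P1 P2 P3 P4 P5 P6 P7 P8 P9 P10 P11 assms(6) by blast
qed

lemma cross: assumes "card F + 6 \<le> card T" "u \<in> V" "v \<in> V" "x \<in> V" "y \<in> V" "distinct [u,v,x,y]"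
  "(e \<in> u) \<noteq> (e \<in> v)" "(e \<in> x) \<noteq> (e \<in> y)"
  shows "good V E u v x y"
proof -
  have C0: "e \<in> u \<Longrightarrow> e \<notin> v \<Longrightarrow> e \<in> x \<Longrightarrow> e \<notin> y \<Longrightarrow> good V E u v x y"
  proof -
    assume h: "e \<in> u" "e \<notin> v" "e \<in> x" "e \<notin> y"
    have dd: "distinct [u, v, x, y]" using assms(6) by auto
    have g: "good V E u v x y" using caseC[OF assms(1) JV_parts(1)[OF eT eF assms(2) h(1)] JV_parts(2)[OF eT eF assms(3) h(2)] JV_parts(1)[OF eT eF assms(4) h(3)] JV_parts(2)[OF eT eF assms(5) h(4)] dd] .
    show ?thesis using g .
  qed
  have C1: "e \<in> u \<Longrightarrow> e \<notin> v \<Longrightarrow> e \<notin> x \<Longrightarrow> e \<in> y \<Longrightarrow> good V E u v x y"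
  proof -
    assume h: "e \<in> u" "e \<notin> v" "e \<notin> x" "e \<in> y"
    have dd: "distinct [u, v, y, x]" using assms(6) by auto
    have g: "good V E u v y x" using caseC[OF assms(1) JV_parts(1)[OF eT eF assms(2) h(1)] JV_parts(2)[OF eT eF assms(3) h(2)] JV_parts(1)[OF eT eF assms(5) h(4)] JV_parts(2)[OF eT eF assms(4) h(3)] dd] .
    show ?thesis using gs2[OF g] .
  qed
  have C2: "e \<notin> u \<Longrightarrow> e \<in> v \<Longrightarrow> e \<in> x \<Longrightarrow> e \<notin> y \<Longrightarrow> good V E u v x y"
  proof -
    assume h: "e \<notin> u" "e \<in> v" "e \<in> x" "e \<notin> y"
    have dd: "distinct [v, u, x, y]" using assms(6) by auto
    have g: "good V E v u x y" using caseC[OF assms(1) JV_parts(1)[OF eT eF assms(3) h(2)] JV_parts(2)[OF eT eF assms(2) h(1)] JV_parts(1)[OF eT eF assms(4) h(3)] JV_parts(2)[OF eT eF assms(5) h(4)] dd] .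
    show ?thesis using gs1[OF g] .
  qed
  have C3: "e \<notin> u \<Longrightarrow> e \<in> v \<Longrightarrow> e \<notin> x \<Longrightarrow> e \<in> y \<Longrightarrow> good V E u v x y"
  proof -
    assume h: "e \<notin> u" "e \<in> v" "e \<notin> x" "e \<in> y"
    have dd: "distinct [v, u, y, x]" using assms(6) by auto
    have g: "good V E v u y x" using caseC[OF assms(1) JV_parts(1)[OF eT eF assms(3) h(2)] JV_parts(2)[OF eT eF assms(2) h(1)] JV_parts(1)[OF eT eF assms(5) h(4)] JV_parts(2)[OF eT eF assms(4) h(3)] dd] .
    show ?thesis using gs2[OF gs1[OF g]] .
  qed
  show ?thesis using C0 C1 C2 C3 assms(7,8) by blast
qed

end

lemma parity: assumes "finite T" "u \<in> JV T F K" "v \<in> JV T F K" "\<forall>e\<in>T. e \<notin> F \<longrightarrow> (e \<in> u) \<noteq> (e \<in> v)"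
  shows "card T - card F = 2 * (K - card F)"
proof -
  have s: "F \<subseteq> u" "u \<subseteq> T" "card u = K" "F \<subseteq> v" "v \<subseteq> T" "card v = K" using assms(2,3) by (auto simp: JV_def)
  have fF: "finite F" "finite u" "finite v" using finite_subset[OF _ assms(1)] s by blast+
  have eq: "T - F = (u - F) \<union> (v - F)" using assms(4) s by blast
  have dj: "(u - F) \<inter> (v - F) = {}" using assms(4) s by blast
  have "card (T - F) = card (u - F) + card (v - F)" unfolding eq using dj fF by (intro card_Un_disjoint) auto
  moreover have "card (u - F) = K - card F" using card_Diff_subset[OF fF(1) s(1)] s(3) by simp
  moreover have "card (v - F) = K - card F" using card_Diff_subset[OF fF(1) s(4)] s(6) by simp
  moreover have "card (T - F) = card T - card F" using card_Diff_subset[OF fF(1)] s(1,2) by blast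
  ultimately show ?thesis by simp
qed

theorem p2c_JV: assumes "finite T" "F \<subseteq> T" "card F < K" "K < card T" "card F + 4 \<le> card T"
  shows "paired_2_coverable (JV T F K) (johnson_adj K)"
  using assms
proof (induction "card T - card F" arbitrary: T F rule: less_induct)
  case less
  note fT = less.prems(1)
  consider "K = Suc (card F)" | "Suc K = card T" | "card T = card F + 4" "K = card F + 2"
    | "card F + 2 \<le> K" "K + 2 \<le> card T" "card F + 5 \<le> card T"
    using less.prems by linarith
  then show ?case
  proof cases
    case 1 then show ?thesis using complete_p2c[OF JV_finite[OF fT] JV_complete1[OF fT]] by simp
  next
    case 2 then show ?thesis using complete_p2c[OF JV_finite[OF fT] JV_complete2[OF fT]] by simp
  next
    case 3 then show ?thesis using JV_octa[OF fT less.prems(2)] by simp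
  next
    case 4
    have st: "stp T F K e" if e: "e \<in> T" "e \<notin> F" for e
    proof -
      note sp = sub_params[OF fT less.prems(2) e]
      have "paired_2_coverable (JV (T - {e}) F K) (johnson_adj K)"
        using less.hyps[OF sp(5)] fT sp 4 less.prems by auto
      moreover have "paired_2_coverable (JV T (insert e F) K) (johnson_adj K)"
        using less.hyps[OF sp(6)] fT sp 4 less.prems by auto
      ultimately show ?thesis using fT less.prems(2) e 4 by unfold_locales auto
    qed
    show ?thesis unfolding p2c_good
    proof (intro allI impI)
      fix u v x y assume h: "u \<in> JV T F K \<and> v \<in> JV T F K \<and> x \<in> JV T F K \<and> y \<in> JV T F K \<and> distinct [u, v, x, y]"
      then have h': "u \<in> JV T F K" "v \<in> JV T F K" "x \<in> JV T F K" "y \<in> JV T F K" "distinct [u, v, x, y]" by auto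
      show "good (JV T F K) (johnson_adj K) u v x y"
      proof (cases "\<exists>e\<in>T. e \<notin> F \<and> \<not> ((e \<in> u) \<noteq> (e \<in> v) \<and> (e \<in> x) \<noteq> (e \<in> y))")
        case True
        then obtain e where e: "e \<in> T" "e \<notin> F" "\<not> ((e \<in> u) \<noteq> (e \<in> v) \<and> (e \<in> x) \<noteq> (e \<in> y))" by blast
        show ?thesis using stp.noncross[OF st[OF e(1,2)] h' e(3)] .
      next
        case False
        have uv: "u \<noteq> v" using h'(5) by simp
        obtain e where e: "e \<in> u" "e \<notin> v" "e \<in> T" "e \<notin> F" using diff_elem[OF fT h'(1,2) uv] by blast
        show ?thesis
        proof (cases "card F + 6 \<le> card T")
          case True
          have "(e \<in> u) \<noteq> (e \<in> v)" "(e \<in> x) \<noteq> (e \<in> y)" using False e by blast+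
          then show ?thesis using stp.cross[OF st[OF e(3,4)] True h'] by blast
        next
          case c5: False
          have "\<forall>e\<in>T. e \<notin> F \<longrightarrow> (e \<in> u) \<noteq> (e \<in> v)" using False by blast
          then have "card T - card F = 2 * (K - card F)" using parity[OF fT h'(1,2)] by blast
          then have False using c5 4 by presburger
          then show ?thesis ..
        qed
      qed
    qed
  qed
qed

theorem theorem4:
  fixes n k :: nat
  assumes "n \<ge> 4" and "1 \<le> k" and "k < n"
  shows "paired_2_coverable (johnson_vertices n k) (johnson_adj k)"
proof -
  have "johnson_vertices n k = JV {1..n} {} k" by (simp add: johnson_vertices_def JV_def)
  moreover have "paired_2_coverable (JV {1..n} {} k) (johnson_adj k)"
    using assms by (intro p2c_JV) auto
  ultimately show ?thesis by simp
qed


end
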